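(* For any $A>0$, $\epsilon>0$ and every $N$ (sufficiently large), there is a $z=z(N,A,\epsilon)$ with $\log\log z>(1-\epsilon)\log\log N$ and $z<N^{\epsilon}$ such that, for all but $O_{A,\epsilon}(N(\log N)^{-A})$ integers $n$ between $1$ and $N$: (1) $\prod_{p\mid n,\ p\leq z} p^{v_p(n)} < N^{\epsilon}$; (2) $\omega(n) - \#\{p \text{ prime}: p\mid n,\ p\leq z\} < \epsilon\log\log z$.
   Context: $v_p(n)$ is the exponent of the prime $p$ in $n$; $\omega(n)$ is the number of distinct prime divisors of $n$; $p$ ranges over primes. *)

theory Defs
  imports Complex_Main "HOL-Computational_Algebra.Primes"
begin

definition omega :: "nat \<Rightarrow> nat" where
  "omega n = card (prime_factors n)"

definition smooth_part :: "real \<Rightarrow> nat \<Rightarrow> nat" where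
  "smooth_part z n = (\<Prod>p\<in>{p\<in>prime_factors n. real p \<le> z}. p ^ multiplicity p n)"

definition omega_le :: "real \<Rightarrow> nat \<Rightarrow> nat" where
  "omega_le z n = card {p\<in>prime_factors n. real p \<le> z}"

end

theory Submission
  imports Defs "HOL-Library.FuncSet" "HOL-Real_Asymp.Real_Asymp"
begin


lemma prod_primes_dvd:
  fixes x :: nat
  assumes "finite S" "\<And>p. p \<in> S \<Longrightarrow> prime p \<and> p dvd x" "x > 0"
  shows "\<Prod>S dvd x"
proof -
  have sub: "S \<subseteq> prime_factors x" using assms by (auto simp: in_prime_factors_iff)
  have "\<Prod>S dvd (\<Prod>p\<in>S. p ^ multiplicity p x)"
  proof (rule prod_dvd_prod)
    fix p assume "p \<in> S"
    hence "multiplicity p x > 0" using assms(2)[OF \<open>p \<in> S\<close>] assms(3)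
      by (simp add: prime_multiplicity_gt_zero_iff)
    thus "p dvd p ^ multiplicity p x" by (simp add: dvd_power)
  qed
  also have "\<dots> dvd (\<Prod>p\<in>prime_factors x. p ^ multiplicity p x)"
    by (rule prod_dvd_prod_subset) (use sub in auto)
  also have "\<dots> = x" using prime_factorization_nat[OF assms(3)] by simp
  finally show ?thesis .
qed

lemma card_multiples:
  fixes d N :: nat assumes "d > 0"
  shows "real (card {n\<in>{1..N}. d dvd n}) \<le> real N / real d"
proof -
  have "{n\<in>{1..N}. d dvd n} \<subseteq> (\<lambda>k. d*k) ` {1..N div d}"
  proof
    fix n assume "n \<in> {n\<in>{1..N}. d dvd n}"
    then obtain k where k: "n = d*k" "1 \<le> n" "n \<le> N" by auto
    hence "k \<ge> 1" by (cases k) auto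
    moreover have "k \<le> N div d" using k assms
      by (metis div_le_mono nonzero_mult_div_cancel_left not_gr_zero)
    ultimately show "n \<in> (\<lambda>k. d*k) ` {1..N div d}" using k by auto
  qed
  hence "card {n\<in>{1..N}. d dvd n} \<le> card {1..N div d}"
    by (meson card_image_le card_mono finite_atLeastAtMost finite_imageI le_trans)
  hence "card {n\<in>{1..N}. d dvd n} \<le> N div d" by simp
  hence "real (card {n\<in>{1..N}. d dvd n}) \<le> real (N div d)" by simp
  also have "\<dots> \<le> real N / real d" by (simp add: of_nat_div_le_of_nat)
  finally show ?thesis .
qed

lemma harm_bound:
  fixes a b :: nat assumes "1 \<le> a"
  shows "a < b \<Longrightarrow> (\<Sum>j\<in>{a..<b}. 1 / real j) \<le> 1 + ln (real b - 1) - ln (real a)"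
proof (induction b)
  case 0
  then show ?case by simp
next
  case (Suc m)
  show ?case
  proof (cases "m = a")
    case True
    then show ?thesis using assms by simp
  next
    case False
    hence am: "a < m" using Suc by simp
    have m2: "m \<ge> 2" using am assms by auto
    have "1 / real m \<le> ln (real m) - ln (real m - 1)"
    proof -
      have pos: "0 < 1 - 1 / real m" using m2 by (simp add: field_simps)
      have "ln (1 - 1 / real m) \<le> - (1 / real m)" using ln_le_minus_one[OF pos] by simp
      moreover have "1 - 1 / real m = (real m - 1) / real m" using m2 by (simp add: field_simps)
      moreover have "ln ((real m - 1) / real m) = ln (real m - 1) - ln (real m)"
        using m2 by (intro ln_divide_pos) auto
      ultimately show ?thesis by simp
    qed
    moreover have "(\<Sum>j\<in>{a..<Suc m}. 1 / real j) = (\<Sum>j\<in>{a..<m}. 1 / real j) + 1 / real m"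
      using am by simp
    ultimately show ?thesis using Suc.IH[OF am] by simp
  qed
qed



lemma empty_iv: "{p. P p \<and> (x::nat) < p \<and> p \<le> x} = {}" by auto

lemma block_bound:
  fixes j :: nat assumes "j \<ge> 1"
  shows "(\<Sum>p\<in>{p. prime p \<and> 2^j < p \<and> p \<le> 2^(j+1)}. 1 / real p) \<le> 2 / real j"
proof -
  define M :: nat where "M = 2^j"
  define Q where "Q = {p. prime p \<and> M < p \<and> p \<le> 2*M}"
  have finQ: "finite Q" unfolding Q_def by (rule finite_subset[of _ "{..2*M}"]) auto
  have Mpos: "M > 0" unfolding M_def by simp
  have dv: "\<Prod>Q dvd (2*M choose M)"
  proof (rule prod_primes_dvd[OF finQ])
    fix p assume p: "p \<in> Q"
    hence pr: "prime p" and pM: "M < p" "p \<le> 2*M" unfolding Q_def by auto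
    have "p dvd fact (2*M)" using pM pr by (simp add: prime_dvd_fact_iff)
    moreover have "fact (2*M) = fact M * fact (2*M - M) * (2*M choose M)"
      using binomial_fact_lemma[of M "2*M"] by simp
    ultimately have "p dvd fact M * fact M * (2*M choose M)" by simp
    moreover have "\<not> p dvd fact M" using pM pr by (simp add: prime_dvd_fact_iff)
    ultimately have "p dvd (2*M choose M)" using pr
      by (metis prime_dvd_mult_iff)
    thus "prime p \<and> p dvd (2*M choose M)" using pr by simp
  next
    show "(2*M choose M) > 0" by simp
  qed
  have "M ^ card Q = (\<Prod>p\<in>Q. M)" by simp
  also have "\<dots> \<le> \<Prod>Q" by (rule prod_mono) (auto simp: Q_def)
  also have "\<dots> \<le> (2*M choose M)" using dv by (rule dvd_imp_le) simp
  also have "\<dots> \<le> 2 ^ (2*M)" by (rule binomial_le_pow2)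
  finally have "2 ^ (j * card Q) \<le> (2::nat) ^ (2*M)" unfolding M_def by (simp add: power_mult)
  hence jc: "j * card Q \<le> 2*M" by (simp add: power_le_imp_le_exp)
  have "(\<Sum>p\<in>Q. 1 / real p) \<le> (\<Sum>p\<in>Q. 1 / real M)"
    by (rule sum_mono) (use Mpos in \<open>auto simp: Q_def intro!: divide_left_mono\<close>)
  also have "\<dots> = real (card Q) / real M" by simp
  also have "\<dots> \<le> 2 / real j"
  proof -
    have "real j * real (card Q) \<le> 2 * real M" using jc by (metis of_nat_le_iff of_nat_mult of_nat_numeral)
    thus ?thesis using Mpos assms by (simp add: field_simps)
  qed
  finally show ?thesis unfolding Q_def M_def by (simp add: mult.commute)
qed

lemma interval_bound:
  fixes a b :: nat assumes "1 \<le> a"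
  shows "a \<le> b \<Longrightarrow> (\<Sum>p\<in>{p. prime p \<and> 2^a < p \<and> p \<le> 2^b}. 1 / real p) \<le> 2 * (\<Sum>j\<in>{a..<b}. 1 / real j)"
proof (induction b)
  case 0 thus ?case using assms by simp
next
  case (Suc m)
  show ?case
  proof (cases "a = Suc m")
    case True
    thus ?thesis by (simp add: empty_iv)
  next
    case False
    hence am: "a \<le> m" using Suc by simp
    have split: "{p. prime p \<and> 2^a < p \<and> p \<le> (2::nat)^Suc m} =
       {p. prime p \<and> 2^a < p \<and> p \<le> 2^m} \<union> {p. prime p \<and> 2^m < p \<and> p \<le> 2^(m+1)}"
    proof -
      have pa: "(2::nat)^a \<le> 2^m" using power_increasing[OF am, of "2::nat"] by simp
      show ?thesis using pa am power_increasing[of m "Suc m" "2::nat"] by (auto intro: le_less_trans[OF pa])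
    qed
    have fin1: "finite {p. prime p \<and> 2^a < p \<and> p \<le> (2::nat)^m}"
      by (rule finite_subset[of _ "{..2^m}"]) auto
    have fin2: "finite {p. prime p \<and> 2^m < p \<and> p \<le> (2::nat)^(m+1)}"
      by (rule finite_subset[of _ "{..2^(m+1)}"]) auto
    have "(\<Sum>p\<in>{p. prime p \<and> 2^a < p \<and> p \<le> 2^Suc m}. 1 / real p) =
       (\<Sum>p\<in>{p. prime p \<and> 2^a < p \<and> p \<le> 2^m}. 1 / real p) +
       (\<Sum>p\<in>{p. prime p \<and> 2^m < p \<and> p \<le> 2^(m+1)}. 1 / real p)"
      unfolding split by (rule sum.union_disjoint[OF fin1 fin2]) auto
    also have "\<dots> \<le> 2 * (\<Sum>j\<in>{a..<m}. 1 / real j) + 2 / real m"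
      using Suc.IH[OF am] block_bound[of m] am assms by simp
    also have "\<dots> = 2 * (\<Sum>j\<in>{a..<Suc m}. 1 / real j)" using am by (simp add: algebra_simps)
    finally show ?thesis .
  qed
qed

lemma interval_bound2:
  fixes a b :: nat assumes "1 \<le> a" "a \<le> b"
  shows "(\<Sum>p\<in>{p. prime p \<and> 2^a < p \<and> p \<le> 2^b}. 1 / real p) \<le> 2 + 2 * ln (real b) - 2 * ln (real a)"
proof (cases "a = b")
  case True
  thus ?thesis by (simp add: empty_iv)
next
  case False
  hence ab: "a < b" using assms by simp
  have "(\<Sum>p\<in>{p. prime p \<and> 2^a < p \<and> p \<le> 2^b}. 1 / real p) \<le> 2 * (\<Sum>j\<in>{a..<b}. 1 / real j)"
    using interval_bound[OF assms] .
  also have "\<dots> \<le> 2 * (1 + ln (real b - 1) - ln (real a))" using harm_bound[OF assms(1) ab] by simp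
  also have "\<dots> \<le> 2 + 2 * ln (real b) - 2 * ln (real a)" using ab assms by simp
  finally show ?thesis .
qed



lemma multiplicity_le_self:
  fixes p d :: nat assumes "prime p" "d > 0"
  shows "multiplicity p d \<le> d"
proof -
  have "p ^ multiplicity p d dvd d" by (rule multiplicity_dvd)
  hence "p ^ multiplicity p d \<le> d" using assms by (intro dvd_imp_le) auto
  moreover have "multiplicity p d < 2 ^ multiplicity p d" by (rule less_exp)
  moreover have "2 ^ multiplicity p d \<le> p ^ multiplicity p d"
    using prime_ge_2_nat[OF assms(1)] by (intro power_mono) auto
  ultimately show ?thesis by linarith
qed

lemma euler_bound:
  fixes P D :: "nat set" and x :: "nat \<Rightarrow> real"
  assumes finP: "finite P" and finD: "finite D"
    and D: "\<And>d. d \<in> D \<Longrightarrow> d > 0 \<and> prime_factors d \<subseteq> P"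
    and Pp: "\<And>p. p \<in> P \<Longrightarrow> prime p"
    and x: "\<And>p. p \<in> P \<Longrightarrow> 0 \<le> x p \<and> x p < 1"
  shows "(\<Sum>d\<in>D. \<Prod>p\<in>P. x p ^ multiplicity p d) \<le> (\<Prod>p\<in>P. 1 / (1 - x p))"
proof -
  define J where "J = Suc (\<Sum>D)"
  define \<phi> where "\<phi> d = restrict (\<lambda>p. multiplicity p d) P" for d
  define F where "F g = (\<Prod>p\<in>P. x p ^ g p)" for g :: "nat \<Rightarrow> nat"
  have injD: "inj_on \<phi> D"
  proof (rule inj_onI)
    fix d d' assume dd: "d \<in> D" "d' \<in> D" "\<phi> d = \<phi> d'"
    show "d = d'"
    proof (rule multiplicity_eq_nat)
      show "0 < d" "0 < d'" using D dd by auto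
      fix q :: nat assume q: "prime q"
      show "multiplicity q d = multiplicity q d'"
      proof (cases "q \<in> P")
        case True
        then show ?thesis using dd(3) unfolding \<phi>_def by (metis restrict_apply')
      next
        case False
        hence "q \<notin> prime_factors d" "q \<notin> prime_factors d'" using D dd by auto
        thus ?thesis using q D dd
          by (metis in_prime_factors_iff not_dvd_imp_multiplicity_0 zero_less_iff_neq_zero)
      qed
    qed
  qed
  have img: "\<phi> ` D \<subseteq> PiE P (\<lambda>_. {..<J})"
  proof
    fix g assume "g \<in> \<phi> ` D"
    then obtain d where d: "d \<in> D" "g = \<phi> d" by auto
    have "d \<le> \<Sum>D" using finD d(1) by (metis le_add1 sum.remove)
    hence "\<And>p. p \<in> P \<Longrightarrow> multiplicity p d < J"
      using multiplicity_le_self Pp D d(1) unfolding J_def by (meson le_imp_less_Suc le_trans)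
    thus "g \<in> PiE P (\<lambda>_. {..<J})" unfolding d(2) \<phi>_def by auto
  qed
  have Fnn: "\<And>g. 0 \<le> F g" unfolding F_def using x by (simp add: prod_nonneg)
  have "(\<Sum>d\<in>D. \<Prod>p\<in>P. x p ^ multiplicity p d) = (\<Sum>d\<in>D. F (\<phi> d))"
    unfolding F_def \<phi>_def by (intro sum.cong refl prod.cong) auto
  also have "\<dots> = (\<Sum>g\<in>\<phi> ` D. F g)" using sum.reindex[OF injD, of F] by simp
  also have "\<dots> \<le> (\<Sum>g\<in>PiE P (\<lambda>_. {..<J}). F g)"
    by (rule sum_mono2) (use img finP Fnn in \<open>auto intro: finite_PiE\<close>)
  also have "\<dots> = (\<Prod>p\<in>P. \<Sum>j\<in>{..<J}. x p ^ j)"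
    unfolding F_def by (rule prod_sum_PiE[symmetric]) (use finP in auto)
  also have "\<dots> \<le> (\<Prod>p\<in>P. 1 / (1 - x p))"
  proof (rule prod_mono)
    fix p assume p: "p \<in> P"
    have "(\<Sum>j\<in>{..<J}. x p ^ j) = (1 - x p ^ J) / (1 - x p)"
      using x[OF p] by (simp add: sum_gp_strict)
    also have "\<dots> \<le> 1 / (1 - x p)"
      using x[OF p] by (intro divide_right_mono) auto
    finally show "0 \<le> (\<Sum>j\<in>{..<J}. x p ^ j) \<and> (\<Sum>j\<in>{..<J}. x p ^ j) \<le> 1 / (1 - x p)"
      using x[OF p] by (auto intro: sum_nonneg)
  qed
  finally show ?thesis .
qed

lemma subset_bound:
  fixes P :: "nat set" and w :: "nat \<Rightarrow> real"
  assumes finP: "finite P" and w: "\<And>p. p \<in> P \<Longrightarrow> 0 \<le> w p" and r: "r > 0"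
  shows "(\<Sum>T\<in>{T. T \<subseteq> P \<and> card T = k}. \<Prod>p\<in>T. w p) \<le> exp (r * (\<Sum>p\<in>P. w p)) / r ^ k"
proof -
  have "(\<Sum>T\<in>{T. T \<subseteq> P \<and> card T = k}. \<Prod>p\<in>T. w p)
      = (\<Sum>T\<in>{T. T \<subseteq> P \<and> card T = k}. (\<Prod>p\<in>T. r * w p) / r ^ k)"
  proof (rule sum.cong[OF refl])
    fix T assume "T \<in> {T. T \<subseteq> P \<and> card T = k}"
    hence "card T = k" by auto
    thus "(\<Prod>p\<in>T. w p) = (\<Prod>p\<in>T. r * w p) / r ^ k" using r
      by (simp add: prod.distrib prod_constant)
  qed
  also have "\<dots> = (\<Sum>T\<in>{T. T \<subseteq> P \<and> card T = k}. (\<Prod>p\<in>T. r * w p) * (\<Prod>p\<in>P - T. 1)) / r ^ k"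
    by (simp add: sum_divide_distrib)
  also have "\<dots> \<le> (\<Sum>T\<in>Pow P. (\<Prod>p\<in>T. r * w p) * (\<Prod>p\<in>P - T. 1)) / r ^ k"
  proof (intro divide_right_mono sum_mono2)
    show "finite (Pow P)" using finP by simp
    show "{T. T \<subseteq> P \<and> card T = k} \<subseteq> Pow P" by auto
    fix T assume "T \<in> Pow P - {T. T \<subseteq> P \<and> card T = k}"
    hence "T \<subseteq> P" by auto
    thus "0 \<le> (\<Prod>p\<in>T. r * w p) * (\<Prod>p\<in>P - T. 1)" using w r
      by (auto intro!: prod_nonneg)
  qed (use r in auto)
  also have "\<dots> = (\<Prod>p\<in>P. r * w p + 1) / r ^ k"
    by (subst prod_add[OF finP]) simp
  also have "\<dots> \<le> (\<Prod>p\<in>P. exp (r * w p)) / r ^ k"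
  proof (intro divide_right_mono prod_mono conjI)
    fix p assume "p \<in> P"
    show "0 \<le> r * w p + 1" using w[OF \<open>p\<in>P\<close>] r by simp
    show "r * w p + 1 \<le> exp (r * w p)" using exp_ge_add_one_self[of "r * w p"] by (simp add: add.commute)
  qed (use r in auto)
  also have "\<dots> = exp (r * (\<Sum>p\<in>P. w p)) / r ^ k"
    by (simp add: exp_sum[OF finP] sum_distrib_left)
  finally show ?thesis .
qed



lemma count2:
  fixes N a b k :: nat and r :: real
  assumes a1: "1 \<le> a" and ab: "a \<le> b" and Nb: "N \<le> 2^b" and r: "r > 0"
  shows "real (card {n\<in>{1..N}. k \<le> card {p\<in>prime_factors n. real p > 2^a}})
         \<le> real N * exp (r * (2 + 2 * ln (real b) - 2 * ln (real a))) / r ^ k"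
proof -
  define P' where "P' = {p. prime p \<and> 2^a < p \<and> p \<le> (2::nat)^b}"
  define \<T> where "\<T> = {T. T \<subseteq> P' \<and> card T = k}"
  define U where "U T = {n\<in>{1..N}. \<Prod>T dvd n}" for T :: "nat set"
  have finP': "finite P'" unfolding P'_def by (rule finite_subset[of _ "{..2^b}"]) auto
  have finT: "finite \<T>" unfolding \<T>_def
    by (rule finite_subset[of _ "Pow P'"]) (use finP' in auto)
  have sub: "{n\<in>{1..N}. k \<le> card {p\<in>prime_factors n. real p > 2^a}} \<subseteq> (\<Union>T\<in>\<T>. U T)"
  proof
    fix n assume n: "n \<in> {n\<in>{1..N}. k \<le> card {p\<in>prime_factors n. real p > 2^a}}"
    then obtain T where T: "T \<subseteq> {p\<in>prime_factors n. real p > 2^a}" "card T = k" "finite T"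
      by (auto elim: obtain_subset_with_card_n)
    have npos: "n > 0" "n \<le> N" using n by auto
    have "T \<subseteq> P'"
    proof
      fix p assume "p \<in> T"
      hence p: "p \<in> prime_factors n" "real p > 2^a" using T by auto
      have "p \<le> n" using p(1) npos by (simp add: dvd_imp_le in_prime_factors_iff)
      moreover have "2^a < p" using p(2) by (metis of_nat_less_iff of_nat_numeral of_nat_power)
      ultimately show "p \<in> P'" using p(1) npos Nb unfolding P'_def by (auto simp: in_prime_factors_iff)
    qed
    hence "T \<in> \<T>" using T unfolding \<T>_def by auto
    moreover have "\<Prod>T dvd n"
      by (rule prod_primes_dvd) (use T npos in \<open>auto simp: in_prime_factors_iff\<close>)
    ultimately show "n \<in> (\<Union>T\<in>\<T>. U T)" using n unfolding U_def by auto
  qed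
  have "real (card {n\<in>{1..N}. k \<le> card {p\<in>prime_factors n. real p > 2^a}}) \<le> real (card (\<Union>T\<in>\<T>. U T))"
    using sub by (intro of_nat_mono card_mono) (auto simp: U_def intro: finite_UN_I finT)
  also have "\<dots> \<le> real (\<Sum>T\<in>\<T>. card (U T))" using card_UN_le[OF finT] by (intro of_nat_mono) auto
  also have "\<dots> = (\<Sum>T\<in>\<T>. real (card (U T)))" by simp
  also have "\<dots> \<le> (\<Sum>T\<in>\<T>. real N * (\<Prod>p\<in>T. 1 / real p))"
  proof (rule sum_mono)
    fix T assume "T \<in> \<T>"
    hence TP: "T \<subseteq> P'" unfolding \<T>_def by auto
    hence pos: "\<Prod>T > 0" using finP' unfolding P'_def
      by (metis (no_types, lifting) mem_Collect_eq prime_gt_0_nat prod_pos subset_iff)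
    have "real (card (U T)) \<le> real N / real (\<Prod>T)" unfolding U_def by (rule card_multiples[OF pos])
    also have "\<dots> = real N * (\<Prod>p\<in>T. 1 / real p)"
    proof -
      have "(\<Prod>p\<in>T. 1 / real p) = (\<Prod>p\<in>T. 1) / (\<Prod>p\<in>T. real p)" by (rule prod_dividef)
      also have "\<dots> = 1 / real (\<Prod>T)" by (simp add: of_nat_prod)
      finally show ?thesis by simp
    qed
    finally show "real (card (U T)) \<le> real N * (\<Prod>p\<in>T. 1 / real p)" .
  qed
  also have "\<dots> = real N * (\<Sum>T\<in>\<T>. \<Prod>p\<in>T. 1 / real p)" by (simp add: sum_distrib_left)
  also have "\<dots> \<le> real N * (exp (r * (\<Sum>p\<in>P'. 1 / real p)) / r ^ k)"
    unfolding \<T>_def by (intro mult_left_mono subset_bound[OF finP'] r) auto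
  also have "\<dots> \<le> real N * (exp (r * (2 + 2 * ln (real b) - 2 * ln (real a))) / r ^ k)"
  proof -
    have "(\<Sum>p\<in>P'. 1 / real p) \<le> 2 + 2 * ln (real b) - 2 * ln (real a)"
      unfolding P'_def by (rule interval_bound2[OF a1 ab])
    thus ?thesis using r by (intro mult_left_mono divide_right_mono) auto
  qed
  finally show ?thesis by simp
qed



lemma sp_facts:
  fixes n :: nat and z :: real assumes n: "n > 0"
  shows "smooth_part z n dvd n" "smooth_part z n > 0"
        "prime_factors (smooth_part z n) \<subseteq> {p. prime p \<and> real p \<le> z}"
proof -
  have "smooth_part z n dvd (\<Prod>p\<in>prime_factors n. p ^ multiplicity p n)"
    unfolding smooth_part_def by (rule prod_dvd_prod_subset) auto
  thus "smooth_part z n dvd n" using prime_factorization_nat[OF n] by simp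
  show pos: "smooth_part z n > 0" unfolding smooth_part_def
  proof (rule prod_pos)
    fix p assume "p \<in> {p\<in>prime_factors n. real p \<le> z}"
    hence "prime p" by (simp add: in_prime_factors_iff)
    hence "0 < p" by (rule prime_gt_0_nat)
    thus "0 < p ^ multiplicity p n" by simp
  qed
  show "prime_factors (smooth_part z n) \<subseteq> {p. prime p \<and> real p \<le> z}"
  proof
    fix q assume q: "q \<in> prime_factors (smooth_part z n)"
    hence qp: "prime q" "q dvd smooth_part z n" by (auto simp: in_prime_factors_iff)
    have fin: "finite {p\<in>prime_factors n. real p \<le> z}" by simp
    have "\<exists>p\<in>{p\<in>prime_factors n. real p \<le> z}. q dvd p ^ multiplicity p n"
      using qp(2) prime_dvd_prod_iff[OF fin qp(1)] unfolding smooth_part_def by simp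
    then obtain p where p: "p \<in> prime_factors n" "real p \<le> z" "q dvd p ^ multiplicity p n"
      by blast
    have pp: "prime p" using p(1) by (simp add: in_prime_factors_iff)
    have "q dvd p" using prime_dvd_power[OF qp(1) p(3)] .
    hence "q = p" using primes_dvd_imp_eq[OF qp(1) pp] by simp
    thus "q \<in> {p. prime p \<and> real p \<le> z}" using p(2) qp(1) by simp
  qed
qed

lemma powr_factor:
  fixes d :: nat and P :: "nat set" and c :: real
  assumes d: "d > 0" and finP: "finite P" and sub: "prime_factors d \<subseteq> P" and Pp: "\<And>p. p \<in> P \<Longrightarrow> prime p"
  shows "real d powr c = (\<Prod>p\<in>P. (real p powr c) ^ multiplicity p d)"
proof -
  have "d = (\<Prod>p\<in>prime_factors d. p ^ multiplicity p d)" using prime_factorization_nat[OF d] .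
  also have "\<dots> = (\<Prod>p\<in>P. p ^ multiplicity p d)"
  proof -
    have "\<forall>p\<in>P - prime_factors d. p ^ multiplicity p d = 1"
    proof
      fix p assume "p \<in> P - prime_factors d"
      hence "multiplicity p d = 0" using Pp d
        by (auto simp: in_prime_factors_iff not_dvd_imp_multiplicity_0)
      thus "p ^ multiplicity p d = 1" by simp
    qed
    thus ?thesis by (intro prod.mono_neutral_left[OF finP sub]) auto
  qed
  finally have deq: "d = (\<Prod>p\<in>P. p ^ multiplicity p d)" .
  have "real d = real (\<Prod>p\<in>P. p ^ multiplicity p d)" using arg_cong[OF deq, of real] .
  also have "\<dots> = (\<Prod>p\<in>P. real p ^ multiplicity p d)" by (simp only: of_nat_prod of_nat_power)
  finally have "real d = (\<Prod>p\<in>P. real p ^ multiplicity p d)" .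
  hence "real d powr c = (\<Prod>p\<in>P. (real p ^ multiplicity p d) powr c)" by (simp add: prod_powr_distrib)
  also have "\<dots> = (\<Prod>p\<in>P. (real p powr c) ^ multiplicity p d)"
  proof (rule prod.cong[OF refl])
    fix p assume "p \<in> P"
    hence pp: "real p > 0" using Pp prime_gt_0_nat by auto
    have "(real p ^ multiplicity p d) powr c = (real p powr real (multiplicity p d)) powr c"
      using pp by (simp add: powr_realpow)
    also have "\<dots> = real p powr (real (multiplicity p d) * c)" by (simp add: powr_powr)
    also have "\<dots> = (real p powr c) ^ multiplicity p d" using pp by (simp add: powr_power)
    finally show "(real p ^ multiplicity p d) powr c = (real p powr c) ^ multiplicity p d" .
  qed
  finally show ?thesis .
qed

lemma small_primes_sum:
  fixes a :: nat assumes "1 \<le> a"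
  shows "(\<Sum>p\<in>{p. prime p \<and> p \<le> (2::nat)^a}. 1 / real p) \<le> 5/2 + 2 * ln (real a)"
proof -
  have eq: "{p. prime p \<and> p \<le> (2::nat)^a} = insert 2 {p. prime p \<and> 2^1 < p \<and> p \<le> (2::nat)^a}"
  proof -
    have two: "(2::nat) \<le> 2^a" using power_increasing[of 1 a "2::nat"] assms by simp
    show ?thesis
    proof (rule set_eqI)
      fix p :: nat
      show "p \<in> {p. prime p \<and> p \<le> 2^a} \<longleftrightarrow> p \<in> insert 2 {p. prime p \<and> 2^1 < p \<and> p \<le> 2^a}"
      proof (cases "p = 2")
        case True thus ?thesis using two by simp
      next
        case False
        have "prime p \<Longrightarrow> 2 < p" using prime_ge_2_nat[of p] False by linarith
        thus ?thesis using False by auto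
      qed
    qed
  qed
  have fin: "finite {p. prime p \<and> 2^1 < p \<and> p \<le> (2::nat)^a}" by (rule finite_subset[of _ "{..2^a}"]) auto
  have "(\<Sum>p\<in>{p. prime p \<and> p \<le> (2::nat)^a}. 1 / real p) = 1/2 + (\<Sum>p\<in>{p. prime p \<and> 2^1 < p \<and> p \<le> (2::nat)^a}. 1 / real p)"
    unfolding eq using fin by (subst sum.insert) auto
  also have "\<dots> \<le> 1/2 + (2 + 2 * ln (real a) - 2 * ln (real 1))"
    using interval_bound2[of 1 a] assms by simp
  finally show ?thesis by simp
qed

lemma inv_exp_bound:
  fixes x :: real assumes "0 \<le> x" "x \<le> 3/4"
  shows "1 / (1 - x) \<le> exp (4 * x)"
proof -
  have "1 / (1 - x) = 1 + x / (1 - x)" using assms by (simp add: field_simps)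
  also have "\<dots> \<le> exp (x / (1 - x))" by (rule exp_ge_add_one_self)
  also have "\<dots> \<le> exp (4 * x)"
  proof -
    have "x * (4*x) \<le> x * 3" using assms by (intro mult_left_mono) auto
    hence "x / (1 - x) \<le> 4 * x" using assms by (simp add: field_simps)
    thus ?thesis by simp
  qed
  finally show ?thesis .
qed



lemma count1:
  fixes N a :: nat and \<epsilon> :: real
  assumes a1: "1 \<le> a" and e: "\<epsilon> > 0" and N1: "N \<ge> 1"
  shows "real (card {n\<in>{1..N}. real N powr \<epsilon> \<le> real (smooth_part (2^a) n)})
     \<le> real N * exp (- \<epsilon> * ln (real N) / (2 * real a)) * exp (15 + 12 * ln (real a))"
proof -
  define \<sigma> :: real where "\<sigma> = 1 / (2 * real a)"
  define Pz where "Pz = {p. prime p \<and> p \<le> (2::nat)^a}"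
  define D1 where "D1 = {d\<in>{1..N}. prime_factors d \<subseteq> Pz \<and> real N powr \<epsilon> \<le> real d}"
  define U where "U d = {n\<in>{1..N}. d dvd n}" for d :: nat
  define x where "x p = real p powr (\<sigma> - 1)" for p :: nat
  have sig: "\<sigma> > 0" using a1 unfolding \<sigma>_def by simp
  have finPz: "finite Pz" unfolding Pz_def by (rule finite_subset[of _ "{..2^a}"]) auto
  have finD1: "finite D1" unfolding D1_def by simp
  have xb: "\<And>p. p \<in> Pz \<Longrightarrow> 0 \<le> x p \<and> x p \<le> 3/2 / real p"
  proof
    fix p assume p: "p \<in> Pz"
    hence pp: "prime p" "p \<le> 2^a" unfolding Pz_def by auto
    hence p2: "real p \<ge> 2" using prime_ge_2_nat by auto
    show "0 \<le> x p" unfolding x_def by simp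
    have "real p \<le> real (2^a)" using pp(2) by (simp only: of_nat_le_iff)
    hence "real p \<le> 2^a" by simp
    hence "real p powr \<sigma> \<le> (2^a) powr \<sigma>" using sig p2
      by (intro powr_mono2) auto
    also have "\<dots> = 2 powr (real a * \<sigma>)" by (simp add: powr_realpow[symmetric] powr_powr)
    also have "\<dots> = 2 powr (1/2)" using a1 unfolding \<sigma>_def by simp
    also have "\<dots> \<le> 3/2"
    proof -
      have "(2 powr (1/2::real))^2 = 2 powr (2 * (1/2))" by (subst powr_power) auto
      hence "(2 powr (1/2::real))^2 \<le> (3/2)^2" by (simp add: power2_eq_square)
      thus ?thesis by (rule power2_le_imp_le) simp
    qed
    finally have "real p powr \<sigma> \<le> 3/2" .
    moreover have "x p = real p powr \<sigma> / real p" unfolding x_def using p2 by (simp add: powr_diff)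
    ultimately show "x p \<le> 3/2 / real p" using p2 by (metis divide_right_mono of_nat_0_le_iff)
  qed
  have sub: "{n\<in>{1..N}. real N powr \<epsilon> \<le> real (smooth_part (2^a) n)} \<subseteq> (\<Union>d\<in>D1. U d)"
  proof
    fix n assume n: "n \<in> {n\<in>{1..N}. real N powr \<epsilon> \<le> real (smooth_part (2^a) n)}"
    hence np: "n > 0" "n \<le> N" by auto
    note sf = sp_facts[OF np(1), of "2^a"]
    have "smooth_part (2^a) n \<le> n" using sf(1) np(1) by (rule dvd_imp_le)
    moreover have "prime_factors (smooth_part (2^a) n) \<subseteq> Pz"
    proof
      fix p assume "p \<in> prime_factors (smooth_part (2^a) n)"
      hence "prime p" "real p \<le> 2^a" using sf(3) by auto
      thus "p \<in> Pz" unfolding Pz_def by (metis of_nat_le_iff of_nat_numeral of_nat_power mem_Collect_eq)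
    qed
    ultimately have "smooth_part (2^a) n \<in> D1" using sf(2) n np unfolding D1_def by auto
    thus "n \<in> (\<Union>d\<in>D1. U d)" using sf(1) n unfolding U_def by auto
  qed
  have "real (card {n\<in>{1..N}. real N powr \<epsilon> \<le> real (smooth_part (2^a) n)}) \<le> real (card (\<Union>d\<in>D1. U d))"
    using sub by (intro of_nat_mono card_mono) (auto simp: U_def intro: finD1)
  also have "\<dots> \<le> real (\<Sum>d\<in>D1. card (U d))" using card_UN_le[OF finD1] by (intro of_nat_mono) auto
  also have "\<dots> = (\<Sum>d\<in>D1. real (card (U d)))" by simp
  also have "\<dots> \<le> (\<Sum>d\<in>D1. real N * real N powr (- \<epsilon> * \<sigma>) * real d powr (\<sigma> - 1))"
  proof (rule sum_mono)
    fix d assume d: "d \<in> D1"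
    hence dpos: "d > 0" and dge: "real N powr \<epsilon> \<le> real d" unfolding D1_def by auto
    have "real (card (U d)) \<le> real N / real d" unfolding U_def by (rule card_multiples[OF dpos])
    also have "\<dots> \<le> real N * real N powr (- \<epsilon> * \<sigma>) * real d powr (\<sigma> - 1)"
    proof -
      have "(real N powr \<epsilon>) powr \<sigma> \<le> real d powr \<sigma>" using dge sig by (intro powr_mono2) auto
      hence "real N powr (\<epsilon> * \<sigma>) \<le> real d powr \<sigma>" by (simp add: powr_powr)
      hence "1 \<le> real N powr (- \<epsilon> * \<sigma>) * real d powr \<sigma>"
        using N1 by (simp add: powr_minus field_simps)
      hence "real N / real d * 1 \<le> real N / real d * (real N powr (- \<epsilon> * \<sigma>) * real d powr \<sigma>)"
        by (intro mult_left_mono) auto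
      hence "real N / real d \<le> real N / real d * (real N powr (- \<epsilon> * \<sigma>) * real d powr \<sigma>)"
        by simp
      also have "\<dots> = real N * real N powr (- \<epsilon> * \<sigma>) * real d powr (\<sigma> - 1)"
        using dpos by (simp add: powr_diff field_simps)
      finally show ?thesis .
    qed
    finally show "real (card (U d)) \<le> real N * real N powr (- \<epsilon> * \<sigma>) * real d powr (\<sigma> - 1)" .
  qed
  also have "\<dots> = real N * real N powr (- \<epsilon> * \<sigma>) * (\<Sum>d\<in>D1. \<Prod>p\<in>Pz. x p ^ multiplicity p d)"
  proof -
    have "(\<Sum>d\<in>D1. real d powr (\<sigma> - 1)) = (\<Sum>d\<in>D1. \<Prod>p\<in>Pz. x p ^ multiplicity p d)"
    proof (rule sum.cong[OF refl])
      fix d assume "d \<in> D1"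
      thus "real d powr (\<sigma> - 1) = (\<Prod>p\<in>Pz. x p ^ multiplicity p d)" unfolding x_def
        by (intro powr_factor finPz) (auto simp: D1_def Pz_def)
    qed
    moreover have "(\<Sum>d\<in>D1. real N * real N powr (- \<epsilon> * \<sigma>) * real d powr (\<sigma> - 1))
       = real N * real N powr (- \<epsilon> * \<sigma>) * (\<Sum>d\<in>D1. real d powr (\<sigma> - 1))"
      by (rule sum_distrib_left[symmetric])
    ultimately show ?thesis by simp
  qed
  also have "\<dots> \<le> real N * real N powr (- \<epsilon> * \<sigma>) * (\<Prod>p\<in>Pz. 1 / (1 - x p))"
  proof -
    have "(\<Sum>d\<in>D1. \<Prod>p\<in>Pz. x p ^ multiplicity p d) \<le> (\<Prod>p\<in>Pz. 1 / (1 - x p))"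
    proof (rule euler_bound[OF finPz finD1])
      fix d assume "d \<in> D1" thus "d > 0 \<and> prime_factors d \<subseteq> Pz" unfolding D1_def by auto
    next
      fix p assume "p \<in> Pz" thus "prime p" unfolding Pz_def by auto
    next
      fix p assume p: "p \<in> Pz"
      hence "real p \<ge> 2" unfolding Pz_def using prime_ge_2_nat by auto
      hence "3/2 / real p \<le> 3/4" by (simp add: field_simps)
      thus "0 \<le> x p \<and> x p < 1" using xb[OF p] by auto
    qed
    thus ?thesis by (intro mult_left_mono) auto
  qed
  also have "\<dots> \<le> real N * real N powr (- \<epsilon> * \<sigma>) * exp (15 + 12 * ln (real a))"
  proof -
    have "(\<Prod>p\<in>Pz. 1 / (1 - x p)) \<le> (\<Prod>p\<in>Pz. exp (6 * (1 / real p)))"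
    proof (rule prod_mono)
      fix p assume p: "p \<in> Pz"
      hence p2: "real p \<ge> 2" unfolding Pz_def using prime_ge_2_nat by auto
      have "x p \<le> 3/2 / real p" "0 \<le> x p" using xb[OF p] by auto
      moreover have "3/2 / real p \<le> 3/4" using p2 by (simp add: field_simps)
      ultimately have "1 / (1 - x p) \<le> exp (4 * x p)" by (intro inv_exp_bound) auto
      also have "\<dots> \<le> exp (6 * (1 / real p))" using \<open>x p \<le> 3/2 / real p\<close> by simp
      finally show "0 \<le> 1 / (1 - x p) \<and> 1 / (1 - x p) \<le> exp (6 * (1 / real p))"
        using \<open>x p \<le> 3/2 / real p\<close> \<open>3/2 / real p \<le> 3/4\<close> by auto
    qed
    also have "\<dots> = exp (6 * (\<Sum>p\<in>Pz. 1 / real p))" by (simp add: exp_sum[OF finPz] sum_distrib_left)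
    also have "\<dots> \<le> exp (15 + 12 * ln (real a))"
      using small_primes_sum[OF a1] unfolding Pz_def by simp
    finally show ?thesis by (intro mult_left_mono) auto
  qed
  also have "real N powr (- \<epsilon> * \<sigma>) = exp (- \<epsilon> * ln (real N) / (2 * real a))"
    using N1 unfolding \<sigma>_def by (simp add: powr_def)
  finally show ?thesis .
qed



lemma ln2_bounds: "1/2 \<le> ln (2::real)" "ln (2::real) \<le> 1"
proof -
  have "ln (1/2::real) \<le> 1/2 - 1" by (rule ln_le_minus_one) simp
  thus "1/2 \<le> ln (2::real)" by (simp add: ln_div)
  have "ln (2::real) \<le> 2 - 1" by (rule ln_le_minus_one) simp
  thus "ln (2::real) \<le> 1" by simp
qed

lemma per_N:
  fixes A \<epsilon> K :: real and N :: nat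
  assumes A: "A > 0" and e: "\<epsilon> > 0" and K: "K = 4*(A+12)/\<epsilon>"
  and h1: "16 \<le> real N"
  and h2: "2*K*ln(ln (real N))*ln 2 \<le> ln (real N)"
  and h3: "1 < \<epsilon>*(K*ln(ln(real N)))"
  and h4: "ln(2*K*ln(ln (real N))) < \<epsilon>*ln(ln(real N))"
  and h5: "ln(2*K*ln(ln (real N))) \<le> ln(ln(real N))/2"
  and h6: "sqrt(ln(ln(real N)))*(2+2*ln(4*K*ln(ln(real N)))) + A*ln(ln(real N)) \<le> \<epsilon>*ln(ln(real N))*ln(ln(ln(real N)))/4"
  and h7: "1 \<le> ln(ln(real N))"
  and h8: "1 \<le> K * ln(ln(real N))"
  shows "\<exists>z::real. z > 1 \<and> ln (ln z) > (1 - \<epsilon>) * ln (ln (real N)) \<and> z < real N powr \<epsilon> \<and>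
      real (card {n \<in> {1..N}. \<not> (real (smooth_part z n) < real N powr \<epsilon> \<and>
                 real (omega n) - real (omega_le z n) < \<epsilon> * ln (ln z))})
        \<le> (exp 27 + 1) * real N * ln (real N) powr (- A)"
proof -
  define X where "X = real N"
  define L where "L = ln (ln X)"
  define ll where "ll = ln X / ln 2"
  define q where "q = ll / (K * L)"
  define a where "a = nat \<lfloor>q\<rfloor>"
  define z :: real where "z = 2 ^ a"
  define b where "b = nat \<lceil>ll\<rceil>"
  define k where "k = nat \<lceil>\<epsilon> * ln (ln z)\<rceil>"
  define r where "r = sqrt L"
  note defs = X_def[symmetric] L_def[symmetric]
  have l2: "1/2 \<le> ln (2::real)" "ln (2::real) \<le> 1" by (rule ln2_bounds)+
  have Kp: "K > 0" using K A e by simp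
  have X16: "16 \<le> X" using h1 X_def by simp
  have lnX: "ln X > 0" using X16 by simp
  have L1: "1 \<le> L" using h7 unfolding defs .
  have KL1: "1 \<le> K * L" using h8 unfolding defs .
  have lnXL: "ln X = exp L" using lnX unfolding L_def by simp
  have lpos: "ll > 0" using lnX l2 unfolding ll_def by simp
  have q2: "q \<ge> 2"
  proof -
    have "2*K*L*ln 2 \<le> ln X" using h2 unfolding defs .
    hence "2 * (K*L) \<le> ll" unfolding ll_def using l2 by (simp add: field_simps)
    thus ?thesis unfolding q_def using KL1 by (simp add: field_simps)
  qed
  have a_le: "real a \<le> q" unfolding a_def using q2 by linarith
  have a_ge: "real a \<ge> q / 2" unfolding a_def using q2 by linarith
  have a2: "a \<ge> 2" unfolding a_def using q2 by linarith
  have lnz: "ln z = real a * ln 2" unfolding z_def by (simp add: ln_realpow)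
  have z1: "z > 1" unfolding z_def using a2 by simp
  have lnz_ge: "ln z \<ge> ln X / (2 * K * L)"
  proof -
    have "ln z \<ge> q / 2 * ln 2" using lnz a_ge l2 by (simp add: mult_right_mono)
    moreover have "q / 2 * ln 2 = ln X / (2 * K * L)" unfolding q_def ll_def using l2 by (simp add: field_simps)
    ultimately show ?thesis by simp
  qed
  have llz: "ln (ln z) \<ge> L - ln (2 * K * L)"
  proof -
    have pos: "ln X / (2 * K * L) > 0" using lnX Kp L1 by simp
    have "ln (ln X / (2 * K * L)) \<le> ln (ln z)" using lnz_ge pos by simp
    moreover have "ln (ln X / (2 * K * L)) = L - ln (2 * K * L)"
      using lnX Kp L1 unfolding L_def by (simp add: ln_div)
    ultimately show ?thesis by simp
  qed
  have h4': "ln (2 * K * L) < \<epsilon> * L" using h4 unfolding defs .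
  have h5': "ln (2 * K * L) \<le> L / 2" using h5 unfolding defs .
  have c2: "ln (ln z) > (1 - \<epsilon>) * ln (ln (real N))" using llz h4' unfolding defs by (simp add: algebra_simps)
  have llz2: "ln (ln z) \<ge> L / 2" using llz h5' by simp
  have c3: "z < real N powr \<epsilon>"
  proof -
    have "ln z \<le> q * ln 2" using lnz a_le l2 by (simp add: mult_right_mono)
    also have "\<dots> = ln X / (K * L)" unfolding q_def ll_def using l2 by (simp add: field_simps)
    also have "\<dots> < \<epsilon> * ln X"
    proof -
      have "1 < \<epsilon> * (K * L)" using h3 unfolding defs .
      hence "ln X * 1 < ln X * (\<epsilon> * (K * L))" using lnX by (intro mult_strict_left_mono) auto
      thus ?thesis using KL1 by (simp add: field_simps)
    qed
    finally have "ln z < \<epsilon> * ln X" .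
    hence "exp (ln z) < exp (\<epsilon> * ln X)" by simp
    thus ?thesis using z1 X16 unfolding X_def by (simp add: powr_def)
  qed
  define B1 where "B1 = {n\<in>{1..N}. real N powr \<epsilon> \<le> real (smooth_part (2^a) n)}"
  define B2 where "B2 = {n\<in>{1..N}. k \<le> card {p\<in>prime_factors n. real p > 2^a}}"
  have subB: "{n \<in> {1..N}. \<not> (real (smooth_part z n) < real N powr \<epsilon> \<and>
                 real (omega n) - real (omega_le z n) < \<epsilon> * ln (ln z))} \<subseteq> B1 \<union> B2"
  proof
    fix n assume n: "n \<in> {n \<in> {1..N}. \<not> (real (smooth_part z n) < real N powr \<epsilon> \<and>
                 real (omega n) - real (omega_le z n) < \<epsilon> * ln (ln z))}"
    show "n \<in> B1 \<union> B2"
    proof (cases "real (smooth_part z n) < real N powr \<epsilon>")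
      case True
      hence d: "\<epsilon> * ln (ln z) \<le> real (omega n) - real (omega_le z n)" using n by auto
      have fin: "finite (prime_factors n)" by simp
      have S: "{p\<in>prime_factors n. real p \<le> z} \<subseteq> prime_factors n" by auto
      have eqQ: "prime_factors n - {p\<in>prime_factors n. real p \<le> z} = {p\<in>prime_factors n. real p > 2^a}"
        unfolding z_def by auto
      have "card {p\<in>prime_factors n. real p > 2^a} = omega n - omega_le z n"
        unfolding omega_def omega_le_def eqQ[symmetric]
        using card_Diff_subset[OF finite_subset[OF S fin] S] by simp
      moreover have "omega_le z n \<le> omega n" unfolding omega_def omega_le_def
        using fin S by (rule card_mono)
      ultimately have "real (card {p\<in>prime_factors n. real p > 2^a}) = real (omega n) - real (omega_le z n)"
        by (simp add: of_nat_diff)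
      hence "\<epsilon> * ln (ln z) \<le> real (card {p\<in>prime_factors n. real p > 2^a})" using d by simp
      hence "\<lceil>\<epsilon> * ln (ln z)\<rceil> \<le> int (card {p\<in>prime_factors n. real p > 2^a})"
        by (simp add: ceiling_le_iff)
      hence "k \<le> card {p\<in>prime_factors n. real p > 2^a}" unfolding k_def by (simp add: nat_le_iff)
      thus ?thesis unfolding B2_def using n by auto
    next
      case False thus ?thesis unfolding B1_def z_def using n by auto
    qed
  qed
  have finB: "finite B1" "finite B2" unfolding B1_def B2_def by auto
  have "real (card {n \<in> {1..N}. \<not> (real (smooth_part z n) < real N powr \<epsilon> \<and>
                 real (omega n) - real (omega_le z n) < \<epsilon> * ln (ln z))}) \<le> real (card (B1 \<union> B2))"
    using subB finB by (intro of_nat_mono card_mono) auto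
  also have "\<dots> \<le> real (card B1) + real (card B2)"
    using card_Un_le[of B1 B2] by linarith
  also have "\<dots> \<le> exp 27 * X * exp (- A * L) + X * exp (- A * L)"
  proof (rule add_mono)
    have "real (card B1) \<le> X * exp (- \<epsilon> * ln X / (2 * real a)) * exp (15 + 12 * ln (real a))"
      unfolding B1_def X_def using count1[of a \<epsilon> N] a2 e h1 by simp
    also have "\<dots> \<le> X * exp (- (A + 12) * L) * exp (27 + 12 * L)"
    proof -
      have apos: "real a > 0" using a2 by simp
      have f1: "\<epsilon> * ln X / (2 * q) \<le> \<epsilon> * ln X / (2 * real a)"
        using apos a_le e lnX by (intro divide_left_mono) auto
      have f2: "\<epsilon> * ln X / (2 * q) = \<epsilon> * K * L * ln 2 / 2"
        unfolding q_def ll_def using lnX Kp L1 l2 by (simp add: field_simps)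
      have f3: "\<epsilon> * K * L * ln 2 / 2 \<ge> \<epsilon> * K * L / 4"
        using l2 e Kp L1 by (simp add: mult_left_mono)
      have f4: "\<epsilon> * K * L / 4 = (A + 12) * L" unfolding K using e by simp
      have f5: "- \<epsilon> * ln X / (2 * real a) = - (\<epsilon> * ln X / (2 * real a))" by simp
      have e1: "- \<epsilon> * ln X / (2 * real a) \<le> - (A + 12) * L"
        unfolding f5 using f1 f2 f3 f4 by linarith
      have "ln (real a) \<le> ln q" using apos a_le by simp
      also have "\<dots> = ln ll - ln (K * L)" unfolding q_def using lpos Kp L1 by (simp add: ln_div)
      also have "\<dots> \<le> ln ll" using KL1 by simp
      also have "\<dots> = L - ln (ln 2)" unfolding ll_def L_def using lnX by (simp add: ln_div)
      also have "\<dots> \<le> L + 1"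
      proof -
        have "ln (1/2) \<le> ln (ln (2::real))" using l2 by simp
        moreover have "ln (1/2::real) = - ln 2" by (simp add: ln_div)
        ultimately show ?thesis using l2 by simp
      qed
      finally have e2: "15 + 12 * ln (real a) \<le> 27 + 12 * L" by simp
      show ?thesis using e1 e2 X16 by (intro mult_mono) auto
    qed
    also have "\<dots> = exp 27 * X * exp (- A * L)" by (simp add: exp_add[symmetric] algebra_simps)
    finally show "real (card B1) \<le> exp 27 * X * exp (- A * L)" .
  next
    have rpos: "r \<ge> 1" unfolding r_def using L1 by simp
    have ab: "a \<le> b"
    proof -
      have "q \<le> ll" unfolding q_def using lpos KL1 by (simp add: field_simps)
      hence "real a \<le> real b" unfolding b_def using a_le by linarith
      thus ?thesis by simp
    qed
    have Nb: "N \<le> 2 ^ b"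
    proof -
      have "X = 2 powr ll" unfolding ll_def powr_def using X16 by simp
      also have "\<dots> \<le> 2 powr (real b)" unfolding b_def by (intro powr_mono) linarith+
      also have "\<dots> = real (2 ^ b)" by (simp add: powr_realpow)
      finally show ?thesis unfolding X_def by (simp only: of_nat_le_iff)
    qed
    have "real (card B2) \<le> X * exp (r * (2 + 2 * ln (real b) - 2 * ln (real a))) / r ^ k"
      unfolding B2_def X_def using count2[of a b N r k] a2 ab Nb rpos by simp
    also have "\<dots> \<le> X * exp (sqrt L * (2 + 2 * ln (4 * K * L))) / exp (\<epsilon> * L * ln L / 4)"
    proof (intro frac_le mult_left_mono)
      show "0 \<le> X" using X16 by simp
      show "0 \<le> X * exp (sqrt L * (2 + 2 * ln (4 * K * L)))" using X16 by simp
      show "0 < exp (\<epsilon> * L * ln L / 4)" by simp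
      have ll1: "ll \<ge> 1"
      proof -
        have "ln X \<ge> 1 + L" unfolding lnXL by (rule exp_ge_add_one_self)
        hence "ln X \<ge> 1" using L1 by simp
        thus ?thesis unfolding ll_def using l2 by (simp add: field_simps)
      qed
      have bpos: "real b \<le> 2 * ll" unfolding b_def using ll1 by linarith
      have apos: "real a > 0" using a2 by simp
      have "ln (real b) - ln (real a) = ln (real b / real a)" using apos a2 ab by (simp add: ln_div)
      also have "\<dots> \<le> ln (4 * K * L)"
      proof -
        have "real b / real a \<le> 2 * ll / (q / 2)" using bpos a_ge apos q2 by (intro frac_le) auto
        also have "\<dots> = 4 * K * L" unfolding q_def using lpos Kp L1 by (simp add: field_simps)
        moreover have "real b / real a > 0" using apos a2 ab by simp
        ultimately show ?thesis by (metis ln_le_cancel_iff order_less_le_trans)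
      qed
      finally have "2 + 2 * ln (real b) - 2 * ln (real a) \<le> 2 + 2 * ln (4 * K * L)" by simp
      thus "exp (r * (2 + 2 * ln (real b) - 2 * ln (real a))) \<le> exp (sqrt L * (2 + 2 * ln (4 * K * L)))"
        unfolding r_def using L1 by (simp add: mult_left_mono)
      have "real k \<ge> \<epsilon> * L / 2"
      proof -
        have "real k \<ge> \<epsilon> * ln (ln z)" unfolding k_def by linarith
        moreover have "\<epsilon> * ln (ln z) \<ge> \<epsilon> * (L / 2)" using llz2 e by (simp add: mult_left_mono)
        ultimately show ?thesis by simp
      qed
      moreover have "ln L \<ge> 0" using L1 by simp
      ultimately have m: "\<epsilon> * L / 2 * (ln L / 2) \<le> real k * (ln L / 2)"
        by (intro mult_right_mono) auto
      have lr: "ln r = ln L / 2" unfolding r_def using L1 by (simp add: ln_sqrt)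
      have eq1: "\<epsilon> * L / 2 * (ln L / 2) = \<epsilon> * L * ln L / 4" by simp
      have eq2: "real k * (ln L / 2) = real k * ln r" unfolding lr ..
      have "\<epsilon> * L * ln L / 4 \<le> real k * ln r" using m unfolding eq1 eq2 .
      hence "exp (\<epsilon> * L * ln L / 4) \<le> exp (real k * ln r)" by simp
      also have "\<dots> = r ^ k" using rpos by (simp add: exp_of_nat_mult)
      finally show "exp (\<epsilon> * L * ln L / 4) \<le> r ^ k" .
    qed
    also have "\<dots> = X * exp (sqrt L * (2 + 2 * ln (4 * K * L)) - \<epsilon> * L * ln L / 4)"
      by (simp add: exp_diff)
    also have "\<dots> \<le> X * exp (- A * L)"
    proof -
      have "sqrt L * (2 + 2 * ln (4 * K * L)) + A * L \<le> \<epsilon> * L * ln L / 4" using h6 unfolding defs .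
      thus ?thesis using X16 by (intro mult_left_mono) auto
    qed
    finally show "real (card B2) \<le> X * exp (- A * L)" .
  qed
  also have "\<dots> = (exp 27 + 1) * real N * ln (real N) powr (- A)"
    using lnX unfolding X_def L_def powr_def by (simp add: algebra_simps)
  finally show ?thesis using z1 c2 c3 by blast
qed



theorem lemma5p1:
  fixes A \<epsilon> :: real
  assumes "A > 0" and "\<epsilon> > 0"
  shows "\<exists>C N0. \<forall>N::nat. N \<ge> N0 \<longrightarrow>
    (\<exists>z::real. z > 1 \<and> ln (ln z) > (1 - \<epsilon>) * ln (ln (real N)) \<and> z < real N powr \<epsilon> \<and>
      real (card {n \<in> {1..N}. \<not> (real (smooth_part z n) < real N powr \<epsilon> \<and>
                 real (omega n) - real (omega_le z n) < \<epsilon> * ln (ln z))})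
        \<le> C * real N * ln (real N) powr (- A))"
proof -
  define K where "K = 4*(A+12)/\<epsilon>"
  have Kp: "K > 0" unfolding K_def using assms by simp
  have ev1: "eventually (\<lambda>x::real. 16 \<le> x) at_top" by real_asymp
  have ev2: "eventually (\<lambda>x::real. 2*K*ln(ln x)*ln 2 \<le> ln x) at_top" using Kp by real_asymp
  have ev3: "eventually (\<lambda>x::real. 1 < \<epsilon>*(K*ln(ln x))) at_top" using Kp assms by real_asymp
  have ev4: "eventually (\<lambda>x::real. ln(2*K*ln(ln x)) < \<epsilon>*ln(ln x)) at_top" using Kp assms by real_asymp
  have ev5: "eventually (\<lambda>x::real. ln(2*K*ln(ln x)) \<le> ln(ln x)/2) at_top" using Kp by real_asymp
  have ev6: "eventually (\<lambda>x::real. sqrt(ln(ln x))*(2+2*ln(4*K*ln(ln x))) + A*ln(ln x) \<le> \<epsilon>*ln(ln x)*ln(ln(ln x))/4) at_top"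
    using Kp assms by real_asymp
  have ev7: "eventually (\<lambda>x::real. 1 \<le> ln(ln x)) at_top" by real_asymp
  have ev8: "eventually (\<lambda>x::real. 1 \<le> K * ln(ln x)) at_top" using Kp by real_asymp
  have ev: "eventually (\<lambda>x::real. 16 \<le> x \<and> 2*K*ln(ln x)*ln 2 \<le> ln x \<and> 1 < \<epsilon>*(K*ln(ln x)) \<and>
     ln(2*K*ln(ln x)) < \<epsilon>*ln(ln x) \<and> ln(2*K*ln(ln x)) \<le> ln(ln x)/2 \<and>
     sqrt(ln(ln x))*(2+2*ln(4*K*ln(ln x))) + A*ln(ln x) \<le> \<epsilon>*ln(ln x)*ln(ln(ln x))/4 \<and>
     1 \<le> ln(ln x) \<and> 1 \<le> K * ln(ln x)) at_top"
    using ev1 ev2 ev3 ev4 ev5 ev6 ev7 ev8 by eventually_elim auto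
  have "eventually (\<lambda>N::nat. 16 \<le> real N \<and> 2*K*ln(ln (real N))*ln 2 \<le> ln (real N) \<and> 1 < \<epsilon>*(K*ln(ln (real N))) \<and>
     ln(2*K*ln(ln (real N))) < \<epsilon>*ln(ln (real N)) \<and> ln(2*K*ln(ln (real N))) \<le> ln(ln (real N))/2 \<and>
     sqrt(ln(ln (real N)))*(2+2*ln(4*K*ln(ln (real N)))) + A*ln(ln (real N)) \<le> \<epsilon>*ln(ln (real N))*ln(ln(ln (real N)))/4 \<and>
     1 \<le> ln(ln (real N)) \<and> 1 \<le> K * ln(ln (real N))) sequentially"
    by (rule eventually_compose_filterlim[OF ev filterlim_real_sequentially])
  then obtain N0 where N0: "\<And>N. N \<ge> N0 \<Longrightarrow> 16 \<le> real N \<and> 2*K*ln(ln (real N))*ln 2 \<le> ln (real N) \<and> 1 < \<epsilon>*(K*ln(ln (real N))) \<and>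
     ln(2*K*ln(ln (real N))) < \<epsilon>*ln(ln (real N)) \<and> ln(2*K*ln(ln (real N))) \<le> ln(ln (real N))/2 \<and>
     sqrt(ln(ln (real N)))*(2+2*ln(4*K*ln(ln (real N)))) + A*ln(ln (real N)) \<le> \<epsilon>*ln(ln (real N))*ln(ln(ln (real N)))/4 \<and>
     1 \<le> ln(ln (real N)) \<and> 1 \<le> K * ln(ln (real N))"
    unfolding eventually_sequentially by blast
  show ?thesis
  proof (rule exI[of _ "exp 27 + 1"], rule exI[of _ N0], intro allI impI)
    fix N :: nat assume "N \<ge> N0"
    note h = N0[OF this]
    show "\<exists>z::real. z > 1 \<and> ln (ln z) > (1 - \<epsilon>) * ln (ln (real N)) \<and> z < real N powr \<epsilon> \<and>
      real (card {n \<in> {1..N}. \<not> (real (smooth_part z n) < real N powr \<epsilon> \<and>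
                 real (omega n) - real (omega_le z n) < \<epsilon> * ln (ln z))})
        \<le> (exp 27 + 1) * real N * ln (real N) powr (- A)"
      by (rule per_N[OF assms K_def]) (use h in auto)
  qed
qed

end
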